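(* Let $d\ge1$ and $L\ge2$ be integers, $\Phi\in\mathbb{R}^{d\times d}$, and $W_1,\dots,W_L\in\mathbb{R}^{d\times d}$, with $\mathcal{R}=\tfrac12\|W_{L:1}-\Phi\|_F^2$. Suppose $\|W_l\|_2\le\alpha$ for $l=1,\dots,L-1$ and $\|W_L\|_2\le\beta$, where $\alpha,\beta\ge0$ and, for some $\phi>0$, $1\le\alpha^{2(L-1)}<L\phi^2$ and $\alpha^{2(L-1)}\beta^2<2\phi^2$. For $\eta>0$ let $W_l^+=W_l-\eta\nabla_l\mathcal{R}$, $l=1,\dots,L$, and let $D_l=W_{l+1}^\intercal W_{l+1}-W_lW_l^\intercal$, $D_l^+=(W_{l+1}^+)^\intercal W_{l+1}^+-W_l^+(W_l^+)^\intercal$ for $l=1,\dots,L-1$. Then $$\|D_l^+-D_l\|_2\le8\eta^2\phi^2\mathcal{R}\quad(l=1,\dots,L-2),\qquad\|D_{L-1}^+-D_{L-1}\|_2\le2\eta^2(L+2)\phi^2\mathcal{R}.$$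
   Context: For $l_2\ge l_1$ write $W_{l_2:l_1}=W_{l_2}\cdots W_{l_1}$, empty products being the identity $I$. $\nabla_l\mathcal{R}=W_{L:l+1}^\intercal(W_{L:1}-\Phi)W_{l-1:1}^\intercal$ is the gradient of $\mathcal{R}(W_1,\dots,W_L)=\tfrac12\|W_L\cdots W_1-\Phi\|_F^2$ with respect to $W_l$, evaluated at $(W_1,\dots,W_L)$. $\|\cdot\|_2$ is the spectral norm and $\|\cdot\|_F$ the Frobenius norm. *)

theory Defs
  imports "HOL-Analysis.Analysis"
begin

text \<open>Square d x d real matrices are \<open>real^'n^'n\<close> (d = CARD('n) \<ge> 1).
  Spectral norm = operator norm of the induced linear map; Frobenius norm explicit.\<close>

definition spec_norm :: "real^'n^'n \<Rightarrow> real" where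
  "spec_norm A = onorm (\<lambda>x. A *v x)"

definition frob_norm :: "real^'n^'n \<Rightarrow> real" where
  "frob_norm A = sqrt (\<Sum>i\<in>UNIV. \<Sum>j\<in>UNIV. (A $ i $ j)^2)"

text \<open>W_{hi:lo} = W hi ** W (hi-1) ** ... ** W lo; identity if hi < lo.\<close>
definition mprod :: "(nat \<Rightarrow> real^'n^'n) \<Rightarrow> nat \<Rightarrow> nat \<Rightarrow> real^'n^'n" where
  "mprod W hi lo = foldl (\<lambda>acc i. acc ** W i) (mat 1) (rev [lo..<Suc hi])"

definition risk :: "nat \<Rightarrow> real^'n^'n \<Rightarrow> (nat \<Rightarrow> real^'n^'n) \<Rightarrow> real" where
  "risk L Phi W = (1/2) * (frob_norm (mprod W L 1 - Phi))^2"

definition grad :: "nat \<Rightarrow> real^'n^'n \<Rightarrow> (nat \<Rightarrow> real^'n^'n) \<Rightarrow> nat \<Rightarrow> real^'n^'n" where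
  "grad L Phi W l = transpose (mprod W L (l+1)) ** (mprod W L 1 - Phi) ** transpose (mprod W (l-1) 1)"

definition gd_step :: "nat \<Rightarrow> real^'n^'n \<Rightarrow> real \<Rightarrow> (nat \<Rightarrow> real^'n^'n) \<Rightarrow> nat \<Rightarrow> real^'n^'n" where
  "gd_step L Phi eta W l = W l - eta *\<^sub>R grad L Phi W l"

definition imbalance :: "(nat \<Rightarrow> real^'n^'n) \<Rightarrow> nat \<Rightarrow> real^'n^'n" where
  "imbalance W l = transpose (W (l+1)) ** W (l+1) - W l ** transpose (W l)"

end

theory Submission imports Defs begin

lemma mm_diff_l: "(A::real^'n^'n) ** (B - C) = A ** B - A ** C"
  by (simp add: matrix_matrix_mult_def vec_eq_iff algebra_simps sum_subtractf)
lemma mm_diff_r: "((A::real^'n^'n) - B) ** C = A ** C - B ** C"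
  by (simp add: matrix_matrix_mult_def vec_eq_iff algebra_simps sum_subtractf)
lemma tr_diff: "transpose ((A::real^'n^'n) - B) = transpose A - transpose B"
  by (simp add: transpose_def vec_eq_iff)

lemma key_alg:
  fixes A a B b :: "real^'n^'n"
  assumes h1: "transpose A ** a = b ** transpose B"
  shows "(transpose (A - e *\<^sub>R a) ** (A - e *\<^sub>R a) - (B - e *\<^sub>R b) ** transpose (B - e *\<^sub>R b))
     - (transpose A ** A - B ** transpose B) = e^2 *\<^sub>R (transpose a ** a - b ** transpose b)"
proof -
  have h2: "transpose a ** A = B ** transpose b"
    using arg_cong[OF h1, of transpose] by (simp add: matrix_transpose_mul)
  show ?thesis
    by (simp add: tr_diff mm_diff_l mm_diff_r transpose_scalar scalar_matrix_assoc[symmetric]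
        matrix_scalar_ac h1 h2 algebra_simps power2_eq_square)
qed

lemma foldl_mm:
  fixes W :: "nat \<Rightarrow> real^'n^'n" and A :: "real^'n^'n"
  shows "foldl (\<lambda>acc i. acc ** W i) A xs = A ** foldl (\<lambda>acc i. acc ** W i) (mat 1) xs"
proof (induction xs arbitrary: A)
  case Nil then show ?case by simp
next
  case (Cons x xs)
  show ?case using Cons.IH[of "A ** W x"] Cons.IH[of "W x"] by (simp add: matrix_mul_assoc)
qed

lemma mprod_split:
  assumes "lo \<le> Suc m" "m \<le> hi"
  shows "mprod W hi lo = mprod W hi (Suc m) ** mprod W m lo"
proof -
  have "[lo..<Suc hi] = [lo..<Suc m] @ [Suc m..<Suc hi]"
    using assms upt_add_eq_append[of lo "Suc m" "hi - m"] by simp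
  then have "rev [lo..<Suc hi] = rev [Suc m..<Suc hi] @ rev [lo..<Suc m]" by simp
  then show ?thesis unfolding mprod_def by (simp add: foldl_mm[of W "foldl _ _ _"])
qed

lemma mprod_single: "mprod W h h = W h"
  by (simp add: mprod_def)
lemma mprod_empty: "hi < lo \<Longrightarrow> mprod W hi lo = mat 1"
  by (simp add: mprod_def)

lemma sn_apply: "norm ((A::real^'n^'n) *v x) \<le> spec_norm A * norm x"
  unfolding spec_norm_def by (rule onorm) simp

lemma sn_le: "(\<And>x. norm ((A::real^'n^'n) *v x) \<le> b * norm x) \<Longrightarrow> spec_norm A \<le> b"
  unfolding spec_norm_def by (rule onorm_le)

lemma sn_nonneg: "0 \<le> spec_norm (A::real^'n^'n)"
  unfolding spec_norm_def by (rule onorm_pos_le) simp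

lemma sn_mult: "spec_norm ((A::real^'n^'n) ** B) \<le> spec_norm A * spec_norm B"
proof (rule sn_le)
  fix x :: "real^'n"
  have "norm ((A ** B) *v x) = norm (A *v (B *v x))" by (simp add: matrix_vector_mul_assoc)
  also have "\<dots> \<le> spec_norm A * norm (B *v x)" by (rule sn_apply)
  also have "\<dots> \<le> spec_norm A * (spec_norm B * norm x)"
    by (rule mult_left_mono[OF sn_apply sn_nonneg])
  finally show "norm ((A ** B) *v x) \<le> spec_norm A * spec_norm B * norm x" by (simp add: mult.assoc)
qed

lemma sn_diff: "spec_norm ((A::real^'n^'n) - B) \<le> spec_norm A + spec_norm B"
proof (rule sn_le)
  fix x :: "real^'n"
  have "norm ((A - B) *v x) = norm (A *v x - B *v x)" by (simp add: matrix_vector_mult_diff_rdistrib)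
  also have "\<dots> \<le> norm (A *v x) + norm (B *v x)" by (rule norm_triangle_ineq4)
  also have "\<dots> \<le> spec_norm A * norm x + spec_norm B * norm x" by (intro add_mono sn_apply)
  finally show "norm ((A - B) *v x) \<le> (spec_norm A + spec_norm B) * norm x" by (simp add: algebra_simps)
qed

lemma sn_scale: "c \<ge> 0 \<Longrightarrow> spec_norm (c *\<^sub>R (A::real^'n^'n)) \<le> c * spec_norm A"
proof (rule sn_le)
  fix x :: "real^'n" assume c: "c \<ge> 0"
  have "norm ((c *\<^sub>R A) *v x) = c * norm (A *v x)" using c
    by (simp add: scaleR_matrix_vector_assoc[symmetric])
  also have "\<dots> \<le> c * (spec_norm A * norm x)" by (rule mult_left_mono[OF sn_apply c])
  finally show "norm ((c *\<^sub>R A) *v x) \<le> c * spec_norm A * norm x" by (simp add: mult.assoc)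
qed

lemma sn_id: "spec_norm (mat 1 :: real^'n^'n) \<le> 1"
  by (rule sn_le) simp

lemma sn_transpose: "spec_norm (transpose (A::real^'n^'n)) \<le> spec_norm A"
proof (rule sn_le)
  fix x :: "real^'n"
  let ?y = "transpose A *v x"
  have y: "?y = x v* A" by (metis transpose_transpose vector_transpose_matrix)
  have "(norm ?y)^2 = inner ?y ?y" by (simp add: power2_norm_eq_inner)
  also have "\<dots> = inner x (A *v ?y)" using y dot_lmul_matrix by metis
  also have "\<dots> \<le> norm x * norm (A *v ?y)" by (rule norm_cauchy_schwarz)
  also have "\<dots> \<le> norm x * (spec_norm A * norm ?y)" by (rule mult_left_mono[OF sn_apply norm_ge_zero])
  finally have h: "norm ?y * norm ?y \<le> (spec_norm A * norm x) * norm ?y"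
    by (simp add: power2_eq_square algebra_simps)
  show "norm ?y \<le> spec_norm A * norm x"
  proof (cases "norm ?y = 0")
    case True then show ?thesis using sn_nonneg[of A] by simp
  next
    case False then show ?thesis using h by (simp add: mult_le_cancel_right)
  qed
qed

lemma sn_frob: "spec_norm (A::real^'n^'n) \<le> frob_norm A"
proof (rule sn_le)
  fix x :: "real^'n"
  have rowsq: "(norm (A $ i))^2 = (\<Sum>j\<in>UNIV. (A $ i $ j)^2)" for i
    unfolding power2_norm_eq_inner by (simp add: inner_vec_def power2_eq_square)
  have "(norm (A *v x))^2 = (\<Sum>i\<in>UNIV. ((A *v x) $ i)^2)"
    unfolding power2_norm_eq_inner by (simp add: inner_vec_def power2_eq_square)
  also have "\<dots> = (\<Sum>i\<in>UNIV. (inner (A $ i) x)^2)" by (simp add: matrix_vector_mul_component)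
  also have "\<dots> \<le> (\<Sum>i\<in>UNIV. (norm (A $ i))^2 * (norm x)^2)"
  proof (rule sum_mono)
    fix i
    have "\<bar>inner (A $ i) x\<bar> \<le> norm (A $ i) * norm x" by (rule Cauchy_Schwarz_ineq2)
    then have "\<bar>inner (A $ i) x\<bar>^2 \<le> (norm (A $ i) * norm x)^2" by (rule power_mono) simp
    then show "(inner (A $ i) x)^2 \<le> (norm (A $ i))^2 * (norm x)^2" by (simp add: power_mult_distrib)
  qed
  also have "\<dots> = (frob_norm A)^2 * (norm x)^2"
    by (simp add: frob_norm_def rowsq sum_distrib_right sum_nonneg)
  finally have "(norm (A *v x))^2 \<le> (frob_norm A * norm x)^2" by (simp add: power_mult_distrib)
  moreover have "0 \<le> frob_norm A * norm x" by (simp add: frob_norm_def sum_nonneg)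
  ultimately show "norm (A *v x) \<le> frob_norm A * norm x" by (rule power2_le_imp_le)
qed


lemma mprod_bound:
  fixes W :: "nat \<Rightarrow> real^'n^'n"
  assumes "a \<ge> 0" "\<forall>i\<in>{lo..hi}. spec_norm (W i) \<le> a"
  shows "spec_norm (mprod W hi lo) \<le> a ^ (Suc hi - lo)"
  using assms(2)
proof (induction hi)
  case 0
  then show ?case
  proof (cases "lo = 0")
    case True then show ?thesis using 0 by (simp add: mprod_single)
  next
    case False then show ?thesis by (simp add: mprod_empty sn_id)
  qed
next
  case (Suc hi)
  show ?case
  proof (cases "Suc hi < lo")
    case True then show ?thesis by (simp add: mprod_empty sn_id)
  next
    case False
    then have lo: "lo \<le> Suc hi" by simp
    have e: "mprod W (Suc hi) lo = W (Suc hi) ** mprod W hi lo"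
      using mprod_split[of lo hi "Suc hi" W] lo by (simp add: mprod_single)
    have ih: "spec_norm (mprod W hi lo) \<le> a ^ (Suc hi - lo)" using Suc by auto
    have w: "spec_norm (W (Suc hi)) \<le> a" using Suc.prems lo by auto
    have "spec_norm (mprod W (Suc hi) lo) \<le> spec_norm (W (Suc hi)) * spec_norm (mprod W hi lo)"
      unfolding e by (rule sn_mult)
    also have "\<dots> \<le> a * a ^ (Suc hi - lo)"
      by (rule mult_mono[OF w ih assms(1) sn_nonneg])
    also have "\<dots> = a ^ (Suc (Suc hi) - lo)" using lo
      by (metis Suc_diff_le power_Suc)
    finally show ?thesis .
  qed
qed

lemma frob_nonneg: "0 \<le> frob_norm A"
  by (simp add: frob_norm_def sum_nonneg)

lemma grad_bound:
  fixes W :: "nat \<Rightarrow> real^'n^'n"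
  assumes "spec_norm (mprod W L (l+1)) \<le> p" "spec_norm (mprod W (l-1) 1) \<le> q"
  shows "spec_norm (grad L Phi W l) \<le> p * frob_norm (mprod W L 1 - Phi) * q"
proof -
  let ?E = "mprod W L 1 - Phi"
  have "spec_norm (grad L Phi W l) \<le> spec_norm (transpose (mprod W L (l+1)) ** ?E) * spec_norm (transpose (mprod W (l-1) 1))"
    unfolding grad_def by (rule sn_mult)
  also have "\<dots> \<le> (spec_norm (transpose (mprod W L (l+1))) * spec_norm ?E) * spec_norm (transpose (mprod W (l-1) 1))"
    by (intro mult_right_mono sn_mult sn_nonneg)
  also have "\<dots> \<le> (p * frob_norm ?E) * q"
    by (intro mult_mono order_trans[OF sn_transpose] sn_frob assms sn_nonneg mult_nonneg_nonneg frob_nonneg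
        order_trans[OF sn_nonneg assms(1)])
  finally show ?thesis .
qed

lemma grad_rel:
  fixes W :: "nat \<Rightarrow> real^'n^'n"
  assumes "1 \<le> l" "l + 1 \<le> L"
  shows "transpose (W (l+1)) ** grad L Phi W (l+1) = grad L Phi W l ** transpose (W l)"
proof -
  have s1: "mprod W L (l+1) = mprod W L (l+2) ** W (l+1)"
    using mprod_split[of "l+1" "l+1" L W] assms by (simp add: mprod_single)
  have s2: "mprod W l 1 = W l ** mprod W (l-1) 1"
    using mprod_split[of 1 "l-1" l W] assms by (simp add: mprod_single)
  let ?E = "mprod W L 1 - Phi"
  have "transpose (W (l+1)) ** grad L Phi W (l+1)
      = (transpose (W (l+1)) ** transpose (mprod W L (l+2))) ** ?E ** transpose (mprod W l 1)"
    unfolding grad_def by (simp add: matrix_mul_assoc)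
  also have "\<dots> = transpose (mprod W L (l+1)) ** ?E ** transpose (mprod W l 1)"
    by (simp only: s1 matrix_transpose_mul)
  also have "\<dots> = transpose (mprod W L (l+1)) ** ?E ** (transpose (mprod W (l-1) 1) ** transpose (W l))"
    by (simp only: s2 matrix_transpose_mul)
  also have "\<dots> = grad L Phi W l ** transpose (W l)"
    unfolding grad_def by (simp add: matrix_mul_assoc)
  finally show ?thesis .
qed

theorem lemma9:
  fixes W :: "nat \<Rightarrow> real^'n^'n" and Phi :: "real^'n^'n"
    and L :: nat and alpha beta phi eta :: real
  assumes "L \<ge> 2"
    and "\<forall>l\<in>{1..L-1}. spec_norm (W l) \<le> alpha"
    and "spec_norm (W L) \<le> beta"
    and "alpha \<ge> 0" and "beta \<ge> 0" and "phi > 0"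
    and "1 \<le> alpha ^ (2*(L-1))"
    and "alpha ^ (2*(L-1)) < real L * phi^2"
    and "alpha ^ (2*(L-1)) * beta^2 < 2 * phi^2"
    and "eta > 0"
  shows "(\<forall>l\<in>{1..L-2}.
            spec_norm (imbalance (gd_step L Phi eta W) l - imbalance W l)
              \<le> 8 * eta^2 * phi^2 * risk L Phi W)
       \<and> spec_norm (imbalance (gd_step L Phi eta W) (L-1) - imbalance W (L-1))
              \<le> 2 * eta^2 * (real L + 2) * phi^2 * risk L Phi W"
proof -
  let ?E = "mprod W L 1 - Phi"
  define f where "f = frob_norm ?E"
  have f0: "0 \<le> f" by (simp add: f_def frob_norm_def sum_nonneg)
  have R: "risk L Phi W = f^2 / 2" by (simp add: risk_def f_def)
  let ?G = "grad L Phi W"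
  have apow: "alpha ^ (2*(L-2)) \<le> alpha ^ (2*(L-1))"
  proof (cases "alpha \<le> 1")
    case True
    then have "alpha ^ (2*(L-2)) \<le> 1" using assms(4) by (simp add: power_le_one)
    then show ?thesis using assms(7) by linarith
  next
    case False then show ?thesis by (intro power_increasing) auto
  qed
  have gb1: "(spec_norm (?G l))^2 \<le> 2 * phi^2 * f^2" if l: "1 \<le> l" "l \<le> L - 1" for l
  proof -
    have m1: "mprod W L (l+1) = W L ** mprod W (L-1) (l+1)"
      using mprod_split[of "l+1" "L-1" L W] l assms(1) by (simp add: mprod_single)
    have b1: "spec_norm (mprod W (L-1) (l+1)) \<le> alpha ^ (Suc (L-1) - (l+1))"
      using mprod_bound[OF assms(4), of "l+1" "L-1" W] assms(2) by auto
    have p: "spec_norm (mprod W L (l+1)) \<le> beta * alpha ^ (Suc (L-1) - (l+1))"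
      unfolding m1 by (rule order_trans[OF sn_mult mult_mono[OF assms(3) b1 assms(5) sn_nonneg]])
    have "\<forall>i\<in>{1..l-1}. spec_norm (W i) \<le> alpha" using assms(2) l by auto
    from mprod_bound[OF assms(4) this]
    have q: "spec_norm (mprod W (l-1) 1) \<le> alpha ^ (Suc (l-1) - 1)" .
    have g: "spec_norm (?G l) \<le> beta * alpha ^ (Suc (L-1) - (l+1)) * f * alpha ^ (Suc (l-1) - 1)"
      using grad_bound[OF p q] by (simp add: f_def)
    have ex: "(Suc (L-1) - (l+1)) + (Suc (l-1) - 1) = L - 2" using l assms(1) by simp
    have "beta * alpha ^ (Suc (L-1) - (l+1)) * f * alpha ^ (Suc (l-1) - 1) = beta * alpha^(L-2) * f"
      by (simp add: ex[symmetric] power_add)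
    with g have g': "spec_norm (?G l) \<le> beta * alpha^(L-2) * f" by (rule ord_le_eq_trans)
    have "(spec_norm (?G l))^2 \<le> (beta * alpha^(L-2) * f)^2"
      by (rule power_mono[OF g' sn_nonneg])
    also have "\<dots> = (alpha ^ (2*(L-2)) * beta^2) * f^2"
      by (simp add: power_mult_distrib power_mult[symmetric] mult.commute)
    also have "\<dots> \<le> (alpha ^ (2*(L-1)) * beta^2) * f^2"
      by (intro mult_right_mono apow) auto
    also have "\<dots> \<le> 2 * phi^2 * f^2"
      using assms(9) by (intro mult_right_mono) auto
    finally show ?thesis .
  qed
  have gbL: "(spec_norm (?G L))^2 \<le> real L * phi^2 * f^2"
  proof -
    have p: "spec_norm (mprod W L (L+1)) \<le> 1" by (simp add: mprod_empty sn_id)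
    have q: "spec_norm (mprod W (L-1) 1) \<le> alpha ^ (Suc (L-1) - 1)"
      using mprod_bound[OF assms(4), of 1 "L-1" W] assms(2) by auto
    have g: "spec_norm (?G L) \<le> alpha^(L-1) * f"
      using grad_bound[OF p q] assms(1) by (simp add: f_def mult.commute)
    have "(spec_norm (?G L))^2 \<le> (alpha^(L-1) * f)^2"
      by (rule power_mono[OF g sn_nonneg])
    also have "\<dots> = alpha ^ (2*(L-1)) * f^2"
      by (simp add: power_mult_distrib power_mult[symmetric] mult.commute)
    also have "\<dots> \<le> real L * phi^2 * f^2"
      using assms(8) by (intro mult_right_mono) auto
    finally show ?thesis .
  qed
  have diff: "spec_norm (imbalance (gd_step L Phi eta W) l - imbalance W l)
      \<le> eta^2 * ((spec_norm (?G (l+1)))^2 + (spec_norm (?G l))^2)"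
    if l: "1 \<le> l" "l \<le> L - 1" for l
  proof -
    have eq: "imbalance (gd_step L Phi eta W) l - imbalance W l
        = eta^2 *\<^sub>R (transpose (?G (l+1)) ** ?G (l+1) - ?G l ** transpose (?G l))"
      unfolding imbalance_def gd_step_def
      by (rule key_alg[OF grad_rel]) (use l in auto)
    have "spec_norm (transpose (?G (l+1)) ** ?G (l+1) - ?G l ** transpose (?G l))
        \<le> spec_norm (transpose (?G (l+1)) ** ?G (l+1)) + spec_norm (?G l ** transpose (?G l))"
      by (rule sn_diff)
    also have "\<dots> \<le> (spec_norm (?G (l+1)))^2 + (spec_norm (?G l))^2"
      unfolding power2_eq_square
      by (intro add_mono order_trans[OF sn_mult] mult_mono sn_transpose sn_nonneg order_refl)
    finally have h: "spec_norm (transpose (?G (l+1)) ** ?G (l+1) - ?G l ** transpose (?G l))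
        \<le> (spec_norm (?G (l+1)))^2 + (spec_norm (?G l))^2" .
    show ?thesis unfolding eq
      by (rule order_trans[OF sn_scale mult_left_mono[OF h]]) auto
  qed
  have e2: "0 \<le> eta^2" by simp
  show ?thesis
  proof
    show "\<forall>l\<in>{1..L-2}. spec_norm (imbalance (gd_step L Phi eta W) l - imbalance W l)
              \<le> 8 * eta^2 * phi^2 * risk L Phi W"
    proof
      fix l assume l: "l \<in> {1..L-2}"
      have "spec_norm (imbalance (gd_step L Phi eta W) l - imbalance W l)
          \<le> eta^2 * ((spec_norm (?G (l+1)))^2 + (spec_norm (?G l))^2)"
        using diff l by auto
      also have "\<dots> \<le> eta^2 * (2 * phi^2 * f^2 + 2 * phi^2 * f^2)"
        using gb1[of "l+1"] gb1[of l] l by (intro mult_left_mono add_mono e2) auto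
      also have "\<dots> = 8 * eta^2 * phi^2 * risk L Phi W" by (simp add: R)
      finally show "spec_norm (imbalance (gd_step L Phi eta W) l - imbalance W l)
              \<le> 8 * eta^2 * phi^2 * risk L Phi W" .
    qed
  next
    have LL: "L - 1 + 1 = L" using assms(1) by simp
    have "spec_norm (imbalance (gd_step L Phi eta W) (L-1) - imbalance W (L-1))
        \<le> eta^2 * ((spec_norm (?G (L-1+1)))^2 + (spec_norm (?G (L-1)))^2)"
      using diff[of "L-1"] assms(1) by auto
    also have "\<dots> \<le> eta^2 * (real L * phi^2 * f^2 + 2 * phi^2 * f^2)"
      unfolding LL using gbL gb1[of "L-1"] assms(1) by (intro mult_left_mono add_mono e2) auto
    also have "\<dots> = 2 * eta^2 * (real L + 2) * phi^2 * risk L Phi W" by (simp add: R algebra_simps)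
    finally show "spec_norm (imbalance (gd_step L Phi eta W) (L-1) - imbalance W (L-1))
              \<le> 2 * eta^2 * (real L + 2) * phi^2 * risk L Phi W" .
  qed
qed

end
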